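(* Let $q\in\mathbb{N}$, $q\ge 1$, and $p\ge 3$. If a graph $G$ is $p$-ordered, then the $q$-complete graph $C_q(G)$ is $q(p-1)$-connected.
   Context: For a graph $G=(V,E)$ and $q\ge 1$, the $q$-complete graph $C_q(G)=(V_q,E_q)$ has vertex set $V_q=V^1\uplus\dots\uplus V^q$, where $V^i=\{v^i\mid v\in V\}$ is a copy of $V$, and edge set $E_q=\bigcup_{i,j\in\{1,\dots,q\}}\{\{u^i,v^j\}\mid \{u,v\}\in E\}$. For an integer $p\ge 3$, a graph is $p$-ordered if for every $p$-tuple $(x_1,\dots,x_p)$ of distinct vertices there is a cycle visiting $x_1,\dots,x_p$ in this order. A graph is $k$-connected if it has more than $k$ vertices and remains connected after deleting any set of fewer than $k$ vertices. *)

theory Defs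
  imports Main "HOL-Library.Sublist"
begin

definition graph :: "'a set \<Rightarrow> 'a set set \<Rightarrow> bool" where
  "graph V E \<longleftrightarrow> finite V \<and> (\<forall>e\<in>E. \<exists>u v. e = {u, v} \<and> u \<noteq> v \<and> u \<in> V \<and> v \<in> V)"

(* q-complete graph C_q(G): vertex v^i is represented as the pair (v, i), 1 <= i <= q *)
definition qcomplete_V :: "nat \<Rightarrow> 'a set \<Rightarrow> ('a \<times> nat) set" where
  "qcomplete_V q V = V \<times> {1..q}"

definition qcomplete_E :: "nat \<Rightarrow> 'a set set \<Rightarrow> ('a \<times> nat) set set" where
  "qcomplete_E q E = {{(u, i), (v, j)} | u v i j. {u, v} \<in> E \<and> i \<in> {1..q} \<and> j \<in> {1..q}}"

definition is_cycle :: "'a set \<Rightarrow> 'a set set \<Rightarrow> 'a list \<Rightarrow> bool" where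
  "is_cycle V E cs \<longleftrightarrow> length cs \<ge> 3 \<and> distinct cs \<and> set cs \<subseteq> V \<and>
     (\<forall>i < length cs. {cs ! i, cs ! ((i + 1) mod length cs)} \<in> E)"

definition p_ordered :: "nat \<Rightarrow> 'a set \<Rightarrow> 'a set set \<Rightarrow> bool" where
  "p_ordered p V E \<longleftrightarrow> card V \<ge> p \<and>
     (\<forall>xs. length xs = p \<and> distinct xs \<and> set xs \<subseteq> V \<longrightarrow>
        (\<exists>cs. is_cycle V E cs \<and> subseq xs cs))"

definition connected_graph :: "'a set \<Rightarrow> 'a set set \<Rightarrow> bool" where
  "connected_graph V E \<longleftrightarrow>
     (\<forall>u\<in>V. \<forall>v\<in>V. (\<lambda>x y. x \<in> V \<and> y \<in> V \<and> {x, y} \<in> E)\<^sup>*\<^sup>* u v)"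

definition k_connected :: "nat \<Rightarrow> 'a set \<Rightarrow> 'a set set \<Rightarrow> bool" where
  "k_connected k V E \<longleftrightarrow> finite V \<and> card V > k \<and>
     (\<forall>S. S \<subseteq> V \<and> card S < k \<longrightarrow> connected_graph (V - S) {e \<in> E. e \<inter> S = {}})"

end

theory Submission
  imports Defs
begin

lemma path_nth:
  assumes "\<And>k. k < n \<Longrightarrow> R (f k) (f (Suc k))"
  shows "R\<^sup>*\<^sup>* (f 0) (f n)"
  using assms
proof (induction n)
  case 0 then show ?case by simp
next
  case (Suc n)
  then have "R\<^sup>*\<^sup>* (f 0) (f n)" by simp
  moreover have "R (f n) (f (Suc n))" using Suc.prems by simp
  ultimately show ?case by (rule rtranclp.rtrancl_into_rtrancl)
qed

lemma ordered_path:
  assumes G: "graph V E" and po: "p_ordered p V E"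
    and TV: "T \<subseteq> V" and cT: "card T + 2 \<le> p"
    and u: "u \<in> V - T" and v: "v \<in> V - T" and uv: "u \<noteq> v"
  shows "(\<lambda>x y. x \<in> V - T \<and> y \<in> V - T \<and> {x,y} \<in> E)\<^sup>*\<^sup>* u v"
proof -
  have fin: "finite V" using G by (simp add: graph_def)
  have cV: "card V \<ge> p" using po by (simp add: p_ordered_def)
  define A where "A = {u,v} \<union> T"
  have AV: "A \<subseteq> V" using TV u v by (auto simp: A_def)
  have finT: "finite T" using TV fin finite_subset by blast
  have cA: "card A = card T + 2" using u v uv finT by (simp add: A_def card_insert_if)
  have finA: "finite A" using AV fin finite_subset by blast
  have "card (V - A) = card V - card A" using fin AV by (simp add: card_Diff_subset finite_subset)
  hence "p - card A \<le> card (V - A)" using cV by linarith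
  then obtain Y where Y: "Y \<subseteq> V - A" "card Y = p - card A" "finite Y"
    by (meson obtain_subset_with_card_n)
  define X where "X = A \<union> Y"
  have finX: "finite X" using finA Y by (simp add: X_def)
  have cX: "card X = p" unfolding X_def using Y finA cA cT
    by (subst card_Un_disjoint) auto
  have XV: "X \<subseteq> V" using AV Y by (auto simp: X_def)
  have uvX: "u \<in> X" "v \<in> X" "T \<subseteq> X" by (auto simp: X_def A_def)
  obtain l where l: "set l = X - {u,v}" "distinct l"
    using finite_distinct_list[of "X - {u,v}"] finX by blast
  define xs where "xs = u # v # l"
  have "card (X - {u,v}) = p - 2" using cX uvX uv finX by (simp add: card_Diff_subset)
  hence "length l = p - 2" using distinct_card[OF l(2)] l(1) by simp
  moreover have "p \<ge> 2" using cT by simp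
  ultimately have lenxs: "length xs = p" by (simp add: xs_def)
  have dxs: "distinct xs" using l uv by (simp add: xs_def)
  have sxs: "set xs \<subseteq> V" using l uvX XV by (auto simp: xs_def)
  obtain cs where cs: "is_cycle V E cs" "subseq xs cs"
  proof -
    have "\<forall>xs. length xs = p \<and> distinct xs \<and> set xs \<subseteq> V \<longrightarrow>
        (\<exists>cs. is_cycle V E cs \<and> subseq xs cs)" using po unfolding p_ordered_def by (rule conjunct2)
    hence "\<exists>cs. is_cycle V E cs \<and> subseq xs cs" using lenxs dxs sxs by simp
    thus ?thesis using that by blast
  qed
  from list_emb_ConsD[OF cs(2)[unfolded xs_def]]
  obtain a b where ab: "cs = a @ u # b" "subseq (v#l) b" by auto
  from list_emb_ConsD[OF ab(2)]
  obtain c d where cd: "b = c @ v # d" "subseq l d" by auto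
  have ld: "set l \<subseteq> set d"
  proof
    fix x assume "x \<in> set l"
    from list_emb_set[OF cd(2) this] show "x \<in> set d" by blast
  qed
  have Td: "T \<subseteq> set d" using ld l uvX u v by auto
  define w where "w = u # c @ [v]"
  have seg: "cs = a @ w @ d" using ab cd by (simp add: w_def)
  have dcs: "distinct cs" and scs: "set cs \<subseteq> V" using cs(1) by (auto simp: is_cycle_def)
  have wd: "set w \<inter> set d = {}" using dcs seg by auto
  have wT: "set w \<inter> T = {}" using wd Td by auto
  have wV: "set w \<subseteq> V" using scs seg by auto
  define f where "f k = cs ! (length a + k)" for k
  have fw: "f k = w ! k" if "k < length w" for k
    using that by (simp add: f_def seg nth_append)
  have fin_mem: "f k \<in> V - T" if "k < length w" for k
    using fw[OF that] nth_mem[OF that] wT wV by auto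
  let ?G = "\<lambda>x y. x \<in> V - T \<and> y \<in> V - T \<and> {x,y} \<in> E"
  have "?G\<^sup>*\<^sup>* (f 0) (f (Suc (length c)))"
  proof (rule path_nth)
    fix k assume k: "k < Suc (length c)"
    have lw: "length w = Suc (Suc (length c))" by (simp add: w_def)
    have i: "length a + k + 1 < length cs" using k seg lw by simp
    have cyc: "\<And>j. j < length cs \<Longrightarrow> {cs ! j, cs ! ((j + 1) mod length cs)} \<in> E"
      using cs(1) unfolding is_cycle_def by blast
    have "{cs ! (length a + k), cs ! ((length a + k + 1) mod length cs)} \<in> E"
      using cyc[of "length a + k"] i by simp
    hence "{f k, f (Suc k)} \<in> E" using i by (simp add: f_def)
    then show "?G (f k) (f (Suc k))" using fin_mem k lw by simp
  qed
  moreover have "f 0 = u" using fw[of 0] by (simp add: w_def)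
  moreover have "f (Suc (length c)) = v" using fw[of "Suc (length c)"]
    by (simp add: w_def nth_append)
  ultimately show ?thesis by simp
qed

theorem lemma5p5:
  fixes V :: "'a set" and E :: "'a set set" and p q :: nat
  assumes "graph V E" and "q \<ge> 1" and "p \<ge> 3" and "p_ordered p V E"
  shows "k_connected (q * (p - 1)) (qcomplete_V q V) (qcomplete_E q E)"
proof -
  let ?VQ = "qcomplete_V q V" and ?EQ = "qcomplete_E q E"
  have fin: "finite V" using assms(1) by (simp add: graph_def)
  have finVQ: "finite ?VQ" by (simp add: qcomplete_V_def fin)
  have cV: "card V \<ge> p" using assms(4) by (simp add: p_ordered_def)
  have cardVQ: "card ?VQ = card V * q" by (simp add: qcomplete_V_def card_cartesian_product)
  have "q * (p - 1) < q * p" using assms(2,3) by simp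
  also have "\<dots> \<le> card V * q" using cV by simp
  finally have big: "card ?VQ > q*(p-1)" using cardVQ by simp
  have conn: "connected_graph (?VQ - S) {e \<in> ?EQ. e \<inter> S = {}}"
    if SV: "S \<subseteq> ?VQ" and cS: "card S < q*(p-1)" for S
  proof -
    define R where "R = ?VQ - S"
    define T where "T = {w \<in> V. \<forall>i\<in>{1..q}. (w,i) \<in> S}"
    have TV: "T \<subseteq> V" by (auto simp: T_def)
    have "T \<times> {1..q} \<subseteq> S" by (auto simp: T_def)
    moreover have "finite S" using SV finVQ finite_subset by blast
    ultimately have "card (T \<times> {1..q}) \<le> card S" by (rule card_mono[rotated])
    hence "card T * q \<le> card S" by (simp add: card_cartesian_product)
    hence "card T * q < (p - 1) * q" using cS by (metis mult.commute order_le_less_trans)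
    hence "card T < p - 1" by (meson mult_less_cancel2)
    hence cT: "card T + 2 \<le> p" by simp
    define r where "r = (\<lambda>x y. x \<in> ?VQ - S \<and> y \<in> ?VQ - S \<and> {x, y} \<in> {e \<in> ?EQ. e \<inter> S = {}})"
    let ?G = "\<lambda>x y. x \<in> V - T \<and> y \<in> V - T \<and> {x,y} \<in> E"
    have surv: "\<exists>a. (w,a) \<in> R" if "w \<in> V - T" for w
      using that by (auto simp: T_def R_def qcomplete_V_def)
    have comp: "x \<in> V - T" if "(x,a) \<in> R" for x a
      using that by (auto simp: T_def R_def qcomplete_V_def)
    have edge: "r (x,a) (y,b)" if "{x,y} \<in> E" "(x,a) \<in> R" "(y,b) \<in> R" for x y a b
    proof -
      have "a \<in> {1..q}" "b \<in> {1..q}" using that(2,3) by (auto simp: R_def qcomplete_V_def)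
      hence "{(x,a),(y,b)} \<in> ?EQ" using that(1) unfolding qcomplete_E_def by blast
      thus ?thesis using that(2,3) by (auto simp: r_def R_def)
    qed
    have claim: "\<exists>b. (y,b) \<in> R \<and> r\<^sup>*\<^sup>* (x,a) (y,b)" if "?G\<^sup>*\<^sup>* x y" "(x,a) \<in> R" for x y a
      using that(1)
    proof (induction rule: rtranclp_induct)
      case base then show ?case using that(2) by blast
    next
      case (step y z)
      then obtain b where b: "(y,b) \<in> R" "r\<^sup>*\<^sup>* (x,a) (y,b)" by blast
      obtain c where c: "(z,c) \<in> R" using surv step(2) by blast
      have "r (y,b) (z,c)" using edge step(2) b c by blast
      thus ?case using b c rtranclp.rtrancl_into_rtrancl[OF b(2)] by blast
    qed
    have same: "r\<^sup>*\<^sup>* (v,b) (v,j)" if "(v,b) \<in> R" "(v,j) \<in> R" for v b j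
    proof -
      have v: "v \<in> V - T" using comp that(1) by blast
      have "card (V - T) \<ge> 2" using cV cT fin TV by (simp add: card_Diff_subset finite_subset)
      hence "card (V - T - {v}) \<ge> 1" using v by (simp add: card_Diff_singleton)
      hence "V - T - {v} \<noteq> {}" by (metis card.empty not_one_le_zero)
      then obtain w where w: "w \<in> V - T" "w \<noteq> v" by blast
      have vw: "v \<noteq> w" using w(2) by simp
      have "?G\<^sup>*\<^sup>* v w" by (rule ordered_path[OF assms(1) assms(4) TV cT v w(1) vw])
      hence "\<exists>w1. ?G v w1" using vw by (cases rule: converse_rtranclpE) auto
      then obtain w1 where w1: "?G v w1" by blast
      obtain c where c: "(w1,c) \<in> R" using surv w1 by blast
      have "r (v,b) (w1,c)" using edge w1 that(1) c by blast
      moreover have "{w1,v} \<in> E" using w1 by (simp add: insert_commute)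
      hence "r (w1,c) (v,j)" using edge that(2) c by blast
      ultimately show ?thesis by (meson rtranclp.rtrancl_into_rtrancl r_into_rtranclp)
    qed
    have main: "r\<^sup>*\<^sup>* x y" if xyR: "x \<in> R" "y \<in> R" for x y
    proof -
      obtain u i v j where xy: "x = (u,i)" "y = (v,j)" by (cases x, cases y) auto
      have u: "u \<in> V - T" and v: "v \<in> V - T" using comp xyR xy by auto
      show ?thesis
      proof (cases "u = v")
        case True thus ?thesis using same xyR xy by simp
      next
        case False
        have "?G\<^sup>*\<^sup>* u v" using ordered_path[OF assms(1) assms(4) TV cT u v False] .
        then obtain b where b: "(v,b) \<in> R" "r\<^sup>*\<^sup>* (u,i) (v,b)" using claim xyR xy by blast
        have "r\<^sup>*\<^sup>* (v,b) (v,j)" using same b(1) xyR(2) xy by simp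
        thus ?thesis using b xy rtranclp_trans[OF b(2)] by simp
      qed
    qed
    show ?thesis unfolding connected_graph_def
    proof (intro ballI)
      fix x y assume "x \<in> ?VQ - S" "y \<in> ?VQ - S"
      hence "r\<^sup>*\<^sup>* x y" using main by (simp add: R_def)
      thus "(\<lambda>x y. x \<in> ?VQ - S \<and> y \<in> ?VQ - S \<and> {x, y} \<in> {e \<in> ?EQ. e \<inter> S = {}})\<^sup>*\<^sup>* x y"
        unfolding r_def .
    qed
  qed
  show ?thesis unfolding k_connected_def using finVQ big conn by blast
qed

end
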